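(* Let $(\mathcal{S},d_S)$ and $(\mathcal{T},d_T)$ be totally bounded premetric spaces, and let $\mathcal{U}(\mathcal{S},\mathcal{T})$ be the set of metric-preserving functions $f:\mathcal{S}\to\mathcal{T}$ (i.e. $d_T(f(x),f(y))=d_S(x,y)$ for all $x,y$), equipped with $d(f,g)=\sup_{x\in\mathcal{S}}d_T(f(x),g(x))$. Then $(\mathcal{U}(\mathcal{S},\mathcal{T}),d)$ is a totally bounded premetric space.
   Context: A premetric space is a set $X$ with a function $d:X\times X\to[0,\infty)$ such that $d(x,x)=0$, $d(x,y)=d(y,x)$, and $d(x,z)\le d(x,y)+d(y,z)$ for all $x,y,z$ ($d(x,y)=0$ need not imply $x=y$). The ball $B_\epsilon(x)=\{y: d(x,y)<\epsilon\}$; the space is totally bounded if for every $\epsilon>0$ finitely many balls of radius $\epsilon$ cover it. *)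

theory Defs
  imports "HOL-Analysis.Analysis"
begin

definition premetric :: "'a set \<Rightarrow> ('a \<Rightarrow> 'a \<Rightarrow> real) \<Rightarrow> bool" where
  "premetric X d \<longleftrightarrow>
     (\<forall>x\<in>X. \<forall>y\<in>X. d x y \<ge> 0) \<and>
     (\<forall>x\<in>X. d x x = 0) \<and>
     (\<forall>x\<in>X. \<forall>y\<in>X. d x y = d y x) \<and>
     (\<forall>x\<in>X. \<forall>y\<in>X. \<forall>z\<in>X. d x z \<le> d x y + d y z)"

definition pball :: "'a set \<Rightarrow> ('a \<Rightarrow> 'a \<Rightarrow> real) \<Rightarrow> 'a \<Rightarrow> real \<Rightarrow> 'a set" where
  "pball X d x e = {y\<in>X. d x y < e}"

definition ptotally_bounded :: "'a set \<Rightarrow> ('a \<Rightarrow> 'a \<Rightarrow> real) \<Rightarrow> bool" where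
  "ptotally_bounded X d \<longleftrightarrow>
     (\<forall>e>0. \<exists>F. finite F \<and> F \<subseteq> X \<and> X \<subseteq> (\<Union>x\<in>F. pball X d x e))"

definition metric_preserving_maps ::
  "'a set \<Rightarrow> ('a \<Rightarrow> 'a \<Rightarrow> real) \<Rightarrow> 'b set \<Rightarrow> ('b \<Rightarrow> 'b \<Rightarrow> real) \<Rightarrow> ('a \<Rightarrow> 'b) set" where
  "metric_preserving_maps S dS T dT =
     {f \<in> S \<rightarrow>\<^sub>E T. \<forall>x\<in>S. \<forall>y\<in>S. dT (f x) (f y) = dS x y}"

text \<open>Sup distance; the 0 makes the empty-domain case well-defined (sup of the empty
set of nonnegative reals is 0) and does not change the value otherwise.\<close>
definition sup_dist :: "'a set \<Rightarrow> ('b \<Rightarrow> 'b \<Rightarrow> real) \<Rightarrow> ('a \<Rightarrow> 'b) \<Rightarrow> ('a \<Rightarrow> 'b) \<Rightarrow> real" where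
  "sup_dist S dT f g = Sup (insert 0 ((\<lambda>x. dT (f x) (g x)) ` S))"

end

theory Submission
  imports Defs
begin

lemma bounded_T:
  assumes pm: "premetric T dT" and tb: "ptotally_bounded T dT"
  shows "\<exists>B. \<forall>a\<in>T. \<forall>b\<in>T. dT a b \<le> B"
proof -
  obtain F where F: "finite F" "F \<subseteq> T" "T \<subseteq> (\<Union>x\<in>F. pball T dT x 1)"
    using tb unfolding ptotally_bounded_def by (meson zero_less_one)
  define M where "M = (\<Sum>p\<in>F\<times>F. dT (fst p) (snd p))"
  have "\<forall>a\<in>T. \<forall>b\<in>T. dT a b \<le> 2 + M"
  proof (intro ballI)
    fix a b assume a: "a \<in> T" and b: "b \<in> T"
    obtain t where t: "t \<in> F" "dT t a < 1" using F(3) a unfolding pball_def by blast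
    obtain s where s: "s \<in> F" "dT s b < 1" using F(3) b unfolding pball_def by blast
    have tT: "t \<in> T" and sT: "s \<in> T" using t s F(2) by auto
    have "dT t s \<le> M" unfolding M_def
      using member_le_sum[of "(t,s)" "F\<times>F" "\<lambda>p. dT (fst p) (snd p)"] F(1,2) t s pm
      unfolding premetric_def by (auto simp: subset_iff)
    moreover have "dT a b \<le> dT a t + dT t b" using pm a b tT unfolding premetric_def by blast
    moreover have "dT t b \<le> dT t s + dT s b" using pm b sT tT unfolding premetric_def by blast
    moreover have "dT a t = dT t a" using pm a tT unfolding premetric_def by blast
    ultimately show "dT a b \<le> 2 + M" using t s by linarith
  qed
  then show ?thesis by blast
qed

theorem mainTheorem9:
  fixes S :: "'a set" and dS :: "'a \<Rightarrow> 'a \<Rightarrow> real"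
    and T :: "'b set" and dT :: "'b \<Rightarrow> 'b \<Rightarrow> real"
  assumes "premetric S dS" and "ptotally_bounded S dS"
    and "premetric T dT" and "ptotally_bounded T dT"
  shows "premetric (metric_preserving_maps S dS T dT) (sup_dist S dT)
       \<and> ptotally_bounded (metric_preserving_maps S dS T dT) (sup_dist S dT)"
proof -
  note pS = assms(1)[unfolded premetric_def]
  note pT = assms(3)[unfolded premetric_def]
  let ?U = "metric_preserving_maps S dS T dT"
  have inT: "f x \<in> T" if "f \<in> ?U" "x \<in> S" for f x
    using that unfolding metric_preserving_maps_def by auto
  have pres: "dT (f x) (f y) = dS x y" if "f \<in> ?U" "x \<in> S" "y \<in> S" for f x y
    using that unfolding metric_preserving_maps_def by auto
  obtain B where B: "\<forall>a\<in>T. \<forall>b\<in>T. dT a b \<le> B" using bounded_T assms(3,4) by blast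
  have bdd: "bdd_above (insert 0 ((\<lambda>x. dT (f x) (g x)) ` S))" if "f \<in> ?U" "g \<in> ?U" for f g
    unfolding bdd_above_def using B inT[OF that(1)] inT[OF that(2)]
    by (intro exI[of _ "max 0 B"]) force
  have upper: "dT (f x) (g x) \<le> sup_dist S dT f g" if "f \<in> ?U" "g \<in> ?U" "x \<in> S" for f g x
    unfolding sup_dist_def using bdd[OF that(1,2)] that(3) by (intro cSup_upper) auto
  have least: "sup_dist S dT f g \<le> z" if "0 \<le> z" "\<And>x. x \<in> S \<Longrightarrow> dT (f x) (g x) \<le> z" for f g z
    unfolding sup_dist_def using that by (intro cSup_least) auto
  have P: "premetric ?U (sup_dist S dT)"
    unfolding premetric_def
  proof (intro conjI ballI)
    fix f g assume f: "f \<in> ?U" and g: "g \<in> ?U"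
    show "0 \<le> sup_dist S dT f g" unfolding sup_dist_def using bdd[OF f g]
      by (intro cSup_upper) auto
    show "sup_dist S dT f g = sup_dist S dT g f" unfolding sup_dist_def
      using pT inT[OF f] inT[OF g] by (intro arg_cong[where f=Sup] arg_cong[where f="insert 0"] image_cong) auto
  next
    fix f assume f: "f \<in> ?U"
    have "sup_dist S dT f f \<le> 0" using pT inT[OF f] by (intro least) auto
    moreover have "0 \<le> sup_dist S dT f f" unfolding sup_dist_def using bdd[OF f f]
      by (intro cSup_upper) auto
    ultimately show "sup_dist S dT f f = 0" by simp
  next
    fix f g h assume f: "f \<in> ?U" and g: "g \<in> ?U" and h: "h \<in> ?U"
    have n1: "0 \<le> sup_dist S dT f g" unfolding sup_dist_def using bdd[OF f g]
      by (intro cSup_upper) auto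
    have n2: "0 \<le> sup_dist S dT g h" unfolding sup_dist_def using bdd[OF g h]
      by (intro cSup_upper) auto
    show "sup_dist S dT f h \<le> sup_dist S dT f g + sup_dist S dT g h"
    proof (rule least)
      show "0 \<le> sup_dist S dT f g + sup_dist S dT g h" using n1 n2 by simp
    next
      fix x assume x: "x \<in> S"
      have "dT (f x) (h x) \<le> dT (f x) (g x) + dT (g x) (h x)"
        using pT inT[OF f x] inT[OF g x] inT[OF h x] by blast
      then show "dT (f x) (h x) \<le> sup_dist S dT f g + sup_dist S dT g h"
        using upper[OF f g x] upper[OF g h x] by linarith
    qed
  qed
  have TB: "ptotally_bounded ?U (sup_dist S dT)"
    unfolding ptotally_bounded_def
  proof (intro allI impI)
    fix e :: real assume e: "e > 0"
    then have e5: "e/5 > 0" by simp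
    obtain FS where FS: "finite FS" "FS \<subseteq> S" "S \<subseteq> (\<Union>x\<in>FS. pball S dS x (e/5))"
      using assms(2)[unfolded ptotally_bounded_def, rule_format, OF e5] by (elim exE conjE) blast
    obtain FT where FT: "finite FT" "FT \<subseteq> T" "T \<subseteq> (\<Union>x\<in>FT. pball T dT x (e/5))"
      using assms(4)[unfolded ptotally_bounded_def, rule_format, OF e5] by (elim exE conjE) blast
    define code where "code f = (\<lambda>s\<in>FS. SOME t. t \<in> FT \<and> dT t (f s) < e/5)" for f :: "'a \<Rightarrow> 'b"
    have codeP: "code f s \<in> FT \<and> dT (code f s) (f s) < e/5" if "f \<in> ?U" "s \<in> FS" for f s
    proof -
      have "\<exists>t. t \<in> FT \<and> dT t (f s) < e/5"
        using FT(3) inT[OF that(1)] that(2) FS(2) unfolding pball_def by blast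
      then have "(SOME t. t \<in> FT \<and> dT t (f s) < e/5) \<in> FT \<and> dT (SOME t. t \<in> FT \<and> dT t (f s) < e/5) (f s) < e/5"
        by (rule someI_ex)
      then show ?thesis unfolding code_def using that(2) by simp
    qed
    have codeU: "code ` ?U \<subseteq> FS \<rightarrow>\<^sub>E FT" using codeP by (auto simp: code_def)
    have finP: "finite (FS \<rightarrow>\<^sub>E FT)" using FS(1) FT(1) by (rule finite_PiE)
    have fin: "finite (code ` ?U)" by (rule finite_subset[OF codeU finP])
    define rep where "rep c = (SOME f. f \<in> ?U \<and> code f = c)" for c
    have repP: "rep (code f) \<in> ?U \<and> code (rep (code f)) = code f" if "f \<in> ?U" for f
    proof -
      have "\<exists>g. g \<in> ?U \<and> code g = code f" using that by blast
      then show ?thesis unfolding rep_def by (rule someI_ex)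
    qed
    have close: "sup_dist S dT g f < e" if f: "f \<in> ?U" and g: "g \<in> ?U" and c: "code f = code g" for f g
    proof -
      have "sup_dist S dT g f \<le> 4*e/5"
      proof (rule least)
        show "0 \<le> 4*e/5" using e by simp
      next
        fix x assume x: "x \<in> S"
        obtain s where s: "s \<in> FS" "dS s x < e/5" using FS(3) x unfolding pball_def by blast
        have sS: "s \<in> S" using s FS(2) by auto
        let ?t = "code f s"
        have t: "?t \<in> FT" "dT ?t (f s) < e/5" "dT ?t (g s) < e/5" using codeP[OF f s(1)] codeP[OF g s(1)] c by auto
        have tT: "?t \<in> T" using t FT(2) by auto
        note fx = inT[OF f x] and gx = inT[OF g x] and fs = inT[OF f sS] and gs = inT[OF g sS]
        have 1: "dT (g x) (f x) \<le> dT (g x) (g s) + dT (g s) (f x)" using pT gx gs fx by blast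
        have 2: "dT (g s) (f x) \<le> dT (g s) ?t + dT ?t (f x)" using pT gs tT fx by blast
        have 3: "dT ?t (f x) \<le> dT ?t (f s) + dT (f s) (f x)" using pT tT fs fx by blast
        have 4: "dT (g x) (g s) = dS s x" using pres[OF g x sS] pS x sS by metis
        have 5: "dT (f s) (f x) = dS s x" using pres[OF f sS x] by simp
        have 6: "dT (g s) ?t = dT ?t (g s)" using pT gs tT by blast
        show "dT (g x) (f x) \<le> 4*e/5" using 1 2 3 4 5 6 t s by linarith
      qed
      then show ?thesis using e by linarith
    qed
    show "\<exists>F. finite F \<and> F \<subseteq> ?U \<and> ?U \<subseteq> (\<Union>x\<in>F. pball ?U (sup_dist S dT) x e)"
    proof (intro exI[of _ "rep ` code ` ?U"] conjI)
      show "finite (rep ` code ` ?U)" using fin by simp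
      show "rep ` code ` ?U \<subseteq> ?U" using repP by auto
      show "?U \<subseteq> (\<Union>x\<in>rep ` code ` ?U. pball ?U (sup_dist S dT) x e)"
      proof
        fix f assume f: "f \<in> ?U"
        have "sup_dist S dT (rep (code f)) f < e" using close[OF f] repP[OF f] by auto
        then show "f \<in> (\<Union>x\<in>rep ` code ` ?U. pball ?U (sup_dist S dT) x e)"
          using f unfolding pball_def by blast
      qed
    qed
  qed
  show ?thesis using P TB by blast
qed

end
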